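(* Assume that the graph Laplacian $\mathbf{L}$ has precisely $r\le n$ distinct eigenvalues. Then $\mathcal{A}_{\mathbf{L}}$ is an $r$-dimensional subalgebra of the algebra $(\mathcal{L}(G),+,\ast)$. A signal $x\in\mathcal{L}(G)$ is contained in $\mathcal{A}_{\mathbf{L}}$ if and only if $\hat{x}_k=\hat{x}_{k'}$ whenever $\lambda_k=\lambda_{k'}$. Furthermore, $$\mathcal{A}_{\mathbf{L}}=\mathrm{span}\{f_{\mathbb{1}},\mathbf{L}f_{\mathbb{1}},\ldots,\mathbf{L}^{r-1}f_{\mathbb{1}}\}.$$
   Context: Let $G$ be a graph with vertex set $V=\{v_1,\dots,v_n\}$ and a symmetric, entrywise non-negative weighted adjacency matrix $\mathbf{A}\in\mathbb{R}^{n\times n}$. The degree matrix $\mathbf{D}$ is diagonal with $\mathbf{D}_{ii}=\sum_k\mathbf{A}_{ik}$ (assumed positive), and the normalized graph Laplacian is $\mathbf{L}=\mathbf{I}_n-\mathbf{D}^{-1/2}\mathbf{A}\mathbf{D}^{-1/2}$. Signals $x:V\to\mathbb{R}$ are identified with vectors in $\mathbb{R}^n$; $\mathcal{L}(G)$ denotes this space. Fix an orthonormal eigendecomposition $\mathbf{L}=\mathbf{U}\,\mathrm{diag}(\lambda_1,\dots,\lambda_n)\,\mathbf{U}^\intercal$ with $\lambda_1\le\dots\le\lambda_n$, where the columns $u_1,\dots,u_n$ of the orthogonal matrix $\mathbf{U}$ are eigenvectors. The graph Fourier transform is $\hat{x}=\mathbf{U}^\intercal x$, i.e. $\hat{x}_k=u_k^\intercal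 x$. The graph convolution is $x\ast y=\mathbf{U}\,\mathrm{diag}(\hat{x})\,\mathbf{U}^\intercal y$; it makes $\mathcal{L}(G)$ a commutative associative algebra with unit $f_{\mathbb{1}}=\sum_{k=1}^n u_k$. Define $\mathcal{A}_{\mathbf{L}}=\mathrm{span}\{f_{\mathbb{1}},\mathbf{L}f_{\mathbb{1}},\mathbf{L}^2 f_{\mathbb{1}},\dots,\mathbf{L}^{n-1}f_{\mathbb{1}}\}$. *)

theory Defs
  imports "HOL-Analysis.Analysis"
begin

text \<open>Signals on the vertex set are vectors in real^'n (vertices = elements of the finite type 'n).\<close>

definition diag_mat :: "('n::finite \<Rightarrow> real) \<Rightarrow> real^'n^'n" where
  "diag_mat d = (\<chi> i j. if i = j then d i else 0)"

definition degree :: "real^'n^'n \<Rightarrow> 'n::finite \<Rightarrow> real" where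
  "degree A i = (\<Sum>k\<in>UNIV. A $ i $ k)"

definition norm_laplacian :: "real^'n^'n \<Rightarrow> real^'n::finite^'n" where
  "norm_laplacian A = mat 1 - diag_mat (\<lambda>i. 1 / sqrt (degree A i)) ** A ** diag_mat (\<lambda>i. 1 / sqrt (degree A i))"

fun matpow :: "real^'n^'n \<Rightarrow> nat \<Rightarrow> real^'n::finite^'n" where
  "matpow M 0 = mat 1"
| "matpow M (Suc k) = M ** matpow M k"

text \<open>Graph Fourier transform w.r.t. the orthogonal eigenvector matrix U.\<close>
definition gft :: "real^'n^'n \<Rightarrow> real^'n \<Rightarrow> real^'n::finite" where
  "gft U x = transpose U *v x"

definition graph_conv :: "real^'n^'n \<Rightarrow> real^'n \<Rightarrow> real^'n \<Rightarrow> real^'n::finite" where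
  "graph_conv U x y = (U ** diag_mat (\<lambda>k. gft U x $ k) ** transpose U) *v y"

definition conv_unit :: "real^'n^'n \<Rightarrow> real^'n::finite" where
  "conv_unit U = (\<Sum>k\<in>UNIV. column k U)"

definition krylov_span :: "real^'n^'n \<Rightarrow> real^'n \<Rightarrow> nat \<Rightarrow> (real^'n::finite) set" where
  "krylov_span L f m = span {matpow L i *v f | i. i < m}"

definition A_L :: "real^'n^'n \<Rightarrow> real^'n^'n \<Rightarrow> (real^'n::finite) set" where
  "A_L L U = krylov_span L (conv_unit U) CARD('n)"

text \<open>Subalgebra of (L(G), +, *): a linear subspace closed under graph convolution,
  containing the unit.\<close>
definition is_conv_subalgebra :: "real^'n^'n \<Rightarrow> (real^'n::finite) set \<Rightarrow> bool" where
  "is_conv_subalgebra U S \<longleftrightarrow> subspace S \<and> conv_unit U \<in> S \<and>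
     (\<forall>x\<in>S. \<forall>y\<in>S. graph_conv U x y \<in> S)"

end

theory Submission
  imports Defs
begin

definition pw :: "('n::finite \<Rightarrow> real) \<Rightarrow> nat \<Rightarrow> real^'n" where
  "pw lam i = (\<chi> k. lam k ^ i)"

definition SS :: "('n::finite \<Rightarrow> real) \<Rightarrow> nat \<Rightarrow> (real^'n) set" where
  "SS lam m = span {pw lam i | i. i < m}"

definition WW :: "('n::finite \<Rightarrow> real) \<Rightarrow> (real^'n) set" where
  "WW lam = {v. \<forall>k k'. lam k = lam k' \<longrightarrow> v $ k = v $ k'}"

definition PP :: "('n::finite \<Rightarrow> real) \<Rightarrow> real set \<Rightarrow> real^'n" where
  "PP lam F = (\<chi> k. \<Prod>\<nu>\<in>F. (lam k - \<nu>))"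

definition ind :: "('n::finite \<Rightarrow> real) \<Rightarrow> real \<Rightarrow> real^'n" where
  "ind lam \<mu> = (\<chi> k. if lam k = \<mu> then 1 else 0)"

lemma SS_mono: "m \<le> m' \<Longrightarrow> SS lam m \<subseteq> SS lam m'"
  unfolding SS_def by (rule span_mono) auto

lemma WW_I: "(\<And>k k'. lam k = lam k' \<Longrightarrow> v $ k = v $ k') \<Longrightarrow> v \<in> WW lam"
  unfolding WW_def by blast

lemma WW_D: "v \<in> WW lam \<Longrightarrow> lam k = lam k' \<Longrightarrow> v $ k = v $ k'"
  unfolding WW_def by blast

lemma subspace_WW: "subspace (WW lam)"
proof -
  have 1: "0 \<in> WW lam" by (rule WW_I) simp
  have 2: "x + y \<in> WW lam" if x: "x \<in> WW lam" and y: "y \<in> WW lam" for x y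
  proof (rule WW_I)
    fix k k' assume e: "lam k = lam k'"
    have "x $ k = x $ k'" "y $ k = y $ k'" using WW_D[OF x e] WW_D[OF y e] by auto
    then show "(x + y) $ k = (x + y) $ k'" by simp
  qed
  have 3: "c *\<^sub>R x \<in> WW lam" if x: "x \<in> WW lam" for x c
  proof (rule WW_I)
    fix k k' assume e: "lam k = lam k'"
    have "x $ k = x $ k'" using WW_D[OF x e] by auto
    then show "(c *\<^sub>R x) $ k = (c *\<^sub>R x) $ k'" by simp
  qed
  show ?thesis unfolding subspace_def using 1 2 3 by blast
qed

lemma SS_sub_WW: "SS lam m \<subseteq> WW lam"
  unfolding SS_def
  by (rule span_minimal[OF _ subspace_WW]) (auto intro!: WW_I simp: pw_def)

lemma mult_SS:
  assumes "v \<in> SS lam m"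
  shows "(\<chi> k. lam k * v $ k) \<in> SS lam (Suc m)"
proof -
  define f where "f = (\<lambda>v::real^'a. \<chi> k. lam k * v $ k)"
  have lin: "linear f" unfolding f_def
    by (rule linearI) (auto simp: vec_eq_iff algebra_simps)
  have "f ` SS lam m = span (f ` {pw lam i | i. i < m})"
    unfolding SS_def using span_linear_image[OF lin] by simp
  also have "\<dots> \<subseteq> SS lam (Suc m)" unfolding SS_def
  proof (rule span_mono)
    show "f ` {pw lam i |i. i < m} \<subseteq> {pw lam i |i. i < Suc m}"
    proof
      fix y assume "y \<in> f ` {pw lam i |i. i < m}"
      then obtain i where "i < m" "y = f (pw lam i)" by auto
      then have "y = pw lam (Suc i)" by (simp add: f_def pw_def vec_eq_iff)
      with \<open>i<m\<close> show "y \<in> {pw lam i |i. i < Suc m}" by auto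
    qed
  qed
  finally show ?thesis using assms unfolding f_def by auto
qed

lemma PP_SS: "finite F \<Longrightarrow> PP lam F \<in> SS lam (Suc (card F))"
proof (induction F rule: finite_induct)
  case empty
  have "PP lam {} = pw lam 0" by (simp add: PP_def pw_def)
  then show ?case unfolding SS_def by (auto intro: span_base)
next
  case (insert a F)
  have eq: "PP lam (insert a F) = (\<chi> k. lam k * PP lam F $ k) - a *\<^sub>R PP lam F"
    using insert by (simp add: PP_def vec_eq_iff algebra_simps)
  have "(\<chi> k. lam k * PP lam F $ k) \<in> SS lam (Suc (card (insert a F)))"
    using mult_SS[OF insert.IH] insert by simp
  moreover have "PP lam F \<in> SS lam (Suc (card (insert a F)))"
    using insert.IH SS_mono[of "Suc (card F)" "Suc (card (insert a F))" lam] insert by auto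
  ultimately show ?case unfolding eq SS_def
    by (intro span_diff span_scale) auto
qed

lemma ind_SS:
  assumes "\<mu> \<in> range lam"
  shows "ind lam \<mu> \<in> SS lam (card (range lam))"
proof -
  let ?F = "range lam - {\<mu>}"
  have fin: "finite ?F" by simp
  have c: "Suc (card ?F) = card (range lam)"
    using assms by (simp add: card_Diff_singleton card_gt_0_iff Suc_diff_1)
  define c where "c = (\<Prod>\<nu>\<in>?F. (\<mu> - \<nu>))"
  have cnz: "c \<noteq> 0" unfolding c_def by (simp add: prod_zero_iff)
  have "ind lam \<mu> = (1 / c) *\<^sub>R PP lam ?F"
  proof (subst vec_eq_iff, intro allI)
    fix k
    show "ind lam \<mu> $ k = ((1 / c) *\<^sub>R PP lam ?F) $ k"
    proof (cases "lam k = \<mu>")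
      case True then show ?thesis using cnz by (simp add: ind_def PP_def c_def)
    next
      case False
      then have "lam k \<in> ?F" by auto
      then have "(\<Prod>\<nu>\<in>?F. (lam k - \<nu>)) = 0" by (simp add: prod_zero_iff)
      then show ?thesis using False by (simp add: ind_def PP_def)
    qed
  qed
  then show ?thesis using PP_SS[OF fin, of lam] c unfolding SS_def
    by (simp add: span_scale)
qed

lemma WW_sub_SS: "WW lam \<subseteq> SS lam (card (range lam))"
proof
  fix v assume v: "v \<in> WW lam"
  define g where "g = (\<lambda>\<mu>. v $ (SOME k. lam k = \<mu>))"
  have "v = (\<Sum>\<mu>\<in>range lam. g \<mu> *\<^sub>R ind lam \<mu>)"
  proof (subst vec_eq_iff, intro allI)
    fix k
    have "(\<Sum>\<mu>\<in>range lam. g \<mu> *\<^sub>R ind lam \<mu>) $ k = (\<Sum>\<mu>\<in>range lam. g \<mu> * (if lam k = \<mu> then 1 else 0))"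
      by (simp add: sum_component ind_def)
    also have "\<dots> = (\<Sum>\<mu>\<in>range lam. if \<mu> = lam k then g \<mu> else 0)"
      by (rule sum.cong) auto
    also have "\<dots> = g (lam k)"
      by (simp add: sum.delta)
    also have "\<dots> = v $ k"
    proof -
      have "lam (SOME k'. lam k' = lam k) = lam k" by (rule someI) (rule refl)
      then show ?thesis using v unfolding g_def WW_def by blast
    qed
    finally show "v $ k = (\<Sum>\<mu>\<in>range lam. g \<mu> *\<^sub>R ind lam \<mu>) $ k" by simp
  qed
  also have "\<dots> \<in> SS lam (card (range lam))" unfolding SS_def
    by (intro span_sum span_scale) (use ind_SS[unfolded SS_def] in auto)
  finally show "v \<in> SS lam (card (range lam))" .
qed

lemma SS_eq_WW: "card (range lam) \<le> m \<Longrightarrow> SS lam m = WW lam"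
  using WW_sub_SS[of lam] SS_mono[of "card (range lam)" m lam] SS_sub_WW[of lam m] by auto

lemma dim_WW: "dim (WW (lam::'n::finite \<Rightarrow> real)) = card (range lam)"
proof (rule antisym)
  have "dim (WW lam) = dim (SS lam (card (range lam)))" using SS_eq_WW[of lam] by simp
  also have "\<dots> \<le> card {pw lam i | i. i < card (range lam)}"
    unfolding SS_def by (rule dim_le_card) auto
  also have "\<dots> \<le> card (range lam)"
  proof -
    have "{pw lam i | i. i < card (range lam)} = pw lam ` {..<card (range lam)}" by auto
    then show ?thesis using card_image_le[of "{..<card (range lam)}" "pw lam"] by simp
  qed
  finally show "dim (WW lam) \<le> card (range lam)" .
next
  have inj: "inj_on (ind lam) (range lam)"
  proof (rule inj_onI)
    fix a b assume "a \<in> range lam" "b \<in> range lam" "ind lam a = ind lam b"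
    then obtain k where k: "lam k = a" by auto
    have "ind lam a $ k = ind lam b $ k" using \<open>ind lam a = ind lam b\<close> by simp
    then show "a = b" using k by (simp add: ind_def split: if_splits)
  qed
  have indep: "independent (ind lam ` range lam)"
  proof (rule pairwise_orthogonal_independent)
    show "pairwise orthogonal (ind lam ` range lam)"
    proof (rule pairwiseI)
      fix x y assume "x \<in> ind lam ` range lam" "y \<in> ind lam ` range lam" "x \<noteq> y"
      then obtain a b where ab0: "x = ind lam a" "y = ind lam b" by auto
      have ab: "x = ind lam a" "y = ind lam b" "a \<noteq> b" using ab0 \<open>x \<noteq> y\<close> by auto
      have "ind lam a \<bullet> ind lam b = (\<Sum>i\<in>UNIV. ind lam a $ i * ind lam b $ i)"
        by (simp only: inner_vec_def inner_real_def)
      also have "\<dots> = 0"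
        by (rule sum.neutral) (use ab(3) in \<open>simp add: ind_def\<close>)
      finally show "orthogonal x y" unfolding orthogonal_def ab(1,2) .
    qed
    show "0 \<notin> ind lam ` range lam"
    proof
      assume "0 \<in> ind lam ` range lam"
      then obtain k where "ind lam (lam k) = 0" by auto
      then have "ind lam (lam k) $ k = 0" by simp
      then show False by (simp add: ind_def)
    qed
  qed
  have sub: "ind lam ` range lam \<subseteq> WW lam" by (auto intro!: WW_I simp: ind_def)
  have "card (range lam) = card (ind lam ` range lam)" using card_image[OF inj] by simp
  also have "\<dots> \<le> dim (WW lam)" by (rule independent_card_le_dim[OF sub indep])
  finally show "card (range lam) \<le> dim (WW lam)" .
qed


lemma diag_mult: "diag_mat a ** diag_mat b = diag_mat (\<lambda>k. a k * b k)"
proof -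
  have "\<And>i j. (\<Sum>k\<in>UNIV. (if i = k then a i else 0) * (if k = j then b k else 0)) =
     (if i = j then a i * b i else 0)"
  proof -
    fix i j :: 'a
    have "(\<Sum>k\<in>UNIV. (if i = k then a i else 0) * (if k = j then b k else 0)) =
       (\<Sum>k\<in>UNIV. if k = i then (if i = j then a i * b i else 0) else 0)"
      by (rule sum.cong) auto
    then show "(\<Sum>k\<in>UNIV. (if i = k then a i else 0) * (if k = j then b k else 0)) =
     (if i = j then a i * b i else 0)" by simp
  qed
  then show ?thesis by (simp add: diag_mat_def matrix_matrix_mult_def vec_eq_iff)
qed

lemma diag_one: "diag_mat (\<lambda>k. 1) = mat 1"
  by (simp add: diag_mat_def mat_def vec_eq_iff)

lemma diag_mv: "diag_mat d *v v = (\<chi> k. d k * v $ k)"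
proof -
  have "\<And>i. (\<Sum>j\<in>UNIV. (if i = j then d i else 0) * v $ j) = d i * v $ i"
  proof -
    fix i
    have "(\<Sum>j\<in>UNIV. (if i = j then d i else 0) * v $ j) = (\<Sum>j\<in>UNIV. if j = i then d i * v $ i else 0)"
      by (rule sum.cong) auto
    then show "(\<Sum>j\<in>UNIV. (if i = j then d i else 0) * v $ j) = d i * v $ i" by simp
  qed
  then show ?thesis by (simp add: diag_mat_def matrix_vector_mult_def vec_eq_iff)
qed

lemma conv_unit_eq: "conv_unit U = U *v (\<chi> k. 1)"
  by (simp add: conv_unit_def matrix_vector_mult_def vec_eq_iff column_def sum_component)

lemma matpow_eq:
  assumes o1: "transpose U ** U = mat 1" and o2: "U ** transpose U = mat 1"
  shows "matpow (U ** diag_mat lam ** transpose U) i = U ** diag_mat (\<lambda>k. lam k ^ i) ** transpose U"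
proof (induction i)
  case 0
  have "U ** diag_mat (\<lambda>k. lam k ^ 0) ** transpose U = U ** transpose U"
    by (simp add: diag_one)
  also have "\<dots> = mat 1" using o2 by simp
  finally show ?case by simp
next
  case (Suc i)
  have "matpow (U ** diag_mat lam ** transpose U) (Suc i)
     = (U ** diag_mat lam ** transpose U) ** (U ** diag_mat (\<lambda>k. lam k ^ i) ** transpose U)"
    using Suc by simp
  also have "\<dots> = U ** diag_mat lam ** (transpose U ** U) ** diag_mat (\<lambda>k. lam k ^ i) ** transpose U"
    by (simp add: matrix_mul_assoc)
  also have "\<dots> = U ** (diag_mat lam ** diag_mat (\<lambda>k. lam k ^ i)) ** transpose U"
    by (simp add: o1 matrix_mul_assoc)
  also have "\<dots> = U ** diag_mat (\<lambda>k. lam k ^ Suc i) ** transpose U"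
    by (simp add: diag_mult)
  finally show ?case .
qed

theorem proposition1:
  fixes A U :: "real^('n::{finite,linorder})^('n::{finite,linorder})"
    and lam :: "('n::{finite,linorder}) \<Rightarrow> real"
    and r :: nat
  assumes sym: "transpose A = A"
    and nonneg: "\<forall>i j. 0 \<le> A $ i $ j"
    and deg_pos: "\<forall>i. 0 < degree A i"
    and orth: "orthogonal_matrix U"
    and eig: "norm_laplacian A = U ** diag_mat lam ** transpose U"
    and sorted: "\<forall>i j. i \<le> j \<longrightarrow> lam i \<le> lam j"
    and r_def: "card (range lam) = r"
  shows "is_conv_subalgebra U (A_L (norm_laplacian A) U)
      \<and> dim (A_L (norm_laplacian A) U) = r
      \<and> (\<forall>x. x \<in> A_L (norm_laplacian A) U \<longleftrightarrow>
            (\<forall>k k'. lam k = lam k' \<longrightarrow> gft U x $ k = gft U x $ k'))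
      \<and> A_L (norm_laplacian A) U = krylov_span (norm_laplacian A) (conv_unit U) r"
proof -
  let ?L = "norm_laplacian A"
  let ?f = "conv_unit U"
  define T where "T = transpose U"
  have o1': "transpose U ** U = mat 1" and o2': "U ** transpose U = mat 1"
    using orth by (auto simp: orthogonal_matrix_def)
  then have o1: "T ** U = mat 1" and o2: "U ** T = mat 1" unfolding T_def by auto
  have inv1: "T *v (U *v v) = v" for v
    by (simp only: matrix_vector_mul_assoc o1 matrix_vector_mul_lid)
  have inv2: "U *v (T *v v) = v" for v
    by (simp only: matrix_vector_mul_assoc o2 matrix_vector_mul_lid)
  have mv: "matpow ?L i *v ?f = U *v pw lam i" for i
  proof -
    have "matpow ?L i *v ?f = (U ** diag_mat (\<lambda>k. lam k ^ i) ** T) *v (U *v (\<chi> k. 1))"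
      unfolding eig matpow_eq[OF o1' o2'] conv_unit_eq T_def ..
    also have "\<dots> = U *v (diag_mat (\<lambda>k. lam k ^ i) *v (T *v (U *v (\<chi> k. 1))))"
      by (simp only: matrix_vector_mul_assoc matrix_mul_assoc)
    also have "\<dots> = U *v (diag_mat (\<lambda>k. lam k ^ i) *v (\<chi> k. 1))"
      by (simp only: inv1)
    also have "diag_mat (\<lambda>k. lam k ^ i) *v (\<chi> k. 1) = pw lam i"
      by (simp add: diag_mv pw_def)
    finally show ?thesis .
  qed
  have kry: "krylov_span ?L ?f m = (\<lambda>v. U *v v) ` SS lam m" for m
  proof -
    have "{matpow ?L i *v ?f | i. i < m} = (\<lambda>v. U *v v) ` {pw lam i | i. i < m}"
      unfolding mv by blast
    then show ?thesis unfolding krylov_span_def SS_def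
      using span_linear_image[OF matrix_vector_mul_linear[of U]] by simp
  qed
  have rle: "r \<le> CARD('n)"
    using r_def card_image_le[of "UNIV::'n set" lam] by simp
  have mem: "x \<in> krylov_span ?L ?f m \<longleftrightarrow> T *v x \<in> WW lam" if "r \<le> m" for x m
  proof -
    have ks: "krylov_span ?L ?f m = (\<lambda>v. U *v v) ` WW lam"
      using kry SS_eq_WW[of lam m] that r_def by simp
    show ?thesis
    proof
      assume "x \<in> krylov_span ?L ?f m"
      then obtain w where "w \<in> WW lam" "x = U *v w" unfolding ks by blast
      then show "T *v x \<in> WW lam" using inv1 by metis
    next
      assume "T *v x \<in> WW lam"
      then have "U *v (T *v x) \<in> (\<lambda>v. U *v v) ` WW lam" by blast
      then show "x \<in> krylov_span ?L ?f m" unfolding ks inv2 .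
    qed
  qed
  have memA: "x \<in> A_L ?L U \<longleftrightarrow> gft U x \<in> WW lam" for x
    unfolding A_L_def gft_def T_def[symmetric] using mem[OF rle] .
  have c1: "is_conv_subalgebra U (A_L ?L U)"
    unfolding is_conv_subalgebra_def
  proof (intro conjI ballI)
    show "subspace (A_L ?L U)" unfolding A_L_def krylov_span_def by (rule subspace_span)
    have "gft U ?f = (\<chi> k. 1)" unfolding gft_def conv_unit_eq T_def[symmetric] inv1 ..
    then show "?f \<in> A_L ?L U" unfolding memA by (auto intro!: WW_I)
    fix x y assume "x \<in> A_L ?L U" "y \<in> A_L ?L U"
    then have hx: "gft U x \<in> WW lam" and hy: "gft U y \<in> WW lam" using memA by auto
    have "gft U (graph_conv U x y) = T *v ((U ** diag_mat (\<lambda>k. gft U x $ k) ** T) *v y)"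
      unfolding graph_conv_def gft_def T_def ..
    also have "\<dots> = diag_mat (\<lambda>k. gft U x $ k) *v (T *v y)"
      by (simp only: matrix_vector_mul_assoc matrix_mul_assoc)
         (simp only: matrix_mul_assoc[symmetric] o1 matrix_mul_lid)
    also have "\<dots> = (\<chi> k. gft U x $ k * gft U y $ k)"
      unfolding diag_mv gft_def T_def ..
    finally have "gft U (graph_conv U x y) = (\<chi> k. gft U x $ k * gft U y $ k)" .
    moreover have "(\<chi> k. gft U x $ k * gft U y $ k) \<in> WW lam"
    proof (rule WW_I)
      fix k k' assume e: "lam k = lam k'"
      have "gft U x $ k = gft U x $ k'" "gft U y $ k = gft U y $ k'"
        using WW_D[OF hx e] WW_D[OF hy e] by auto
      then show "(\<chi> k. gft U x $ k * gft U y $ k) $ k = (\<chi> k. gft U x $ k * gft U y $ k) $ k'"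
        by simp
    qed
    ultimately show "graph_conv U x y \<in> A_L ?L U"
      unfolding memA by simp
  qed
  have c2: "dim (A_L ?L U) = r"
  proof -
    have "dim (A_L ?L U) = dim ((\<lambda>v. U *v v) ` SS lam CARD('n))"
      unfolding A_L_def kry ..
    also have "\<dots> = dim (SS lam CARD('n))"
    proof (rule dim_image_eq)
      show "linear ((*v) U)" by simp
      show "inj_on ((*v) U) (span (SS lam CARD('n)))"
        by (rule inj_on_inverseI[where g="\<lambda>v. T *v v"]) (simp only: inv1)
    qed
    also have "\<dots> = r" using SS_eq_WW[of lam] rle r_def dim_WW[of lam] by simp
    finally show ?thesis .
  qed
  have c3: "A_L ?L U = krylov_span ?L ?f r"
  proof -
    show ?thesis
      by (rule set_eqI) (simp only: A_L_def mem[OF rle] mem[OF order_refl])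
  qed
  have c4: "\<forall>x. x \<in> A_L ?L U \<longleftrightarrow>
            (\<forall>k k'. lam k = lam k' \<longrightarrow> gft U x $ k = gft U x $ k')"
    using memA unfolding WW_def mem_Collect_eq by blast
  show ?thesis by (intro conjI c1 c2 c3 c4)
qed

end
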